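(* Let $N,d\in\mathbb{N}^*$, $\alpha>0$, and for $i\neq j$ let $\Psi_{ij}:\mathbb{R}^{2dN}\to\mathbb{R}_+$ be non-negative, bounded and locally Lipschitz. Let $(x_i,v_i)_i$ be a solution on $\mathbb{R}_+$ of $\frac{dx_i}{dt}=v_i$, $\frac{dv_i}{dt}=\alpha\sum_jQ_t(i,j)(v_j-v_i)$, where $Q_t(i,j)=\Psi_{ij}((x_k(t),v_k(t))_k)$ for $i\ne j$ and $Q_t(i,i)=-\sum_{j\ne i}Q_t(i,j)$, and let $(P^*_{s,t})_{0\le s\le t}$ be the solution on $\mathbb{R}_+$ of $P^*_{t,t}=I$, $\partial_tP^*_{s,t}=\alpha Q_tP^*_{s,t}$, $\partial_sP^*_{s,t}=-\alpha P^*_{s,t}Q_s$. Suppose there exists $C:\mathbb{R}_+^2\to\mathbb{R}_+$ such that (a) for all $t\ge0$, $r\mapsto C(t,r)$ is increasing; (b) for all $r\ge X(0)$, $C(t,r)\to0$ as $t\to+\infty$; (c) for all $t\ge0$, $1-\mu(P^*_{0,t})\le C(t,\sup_{s\le t}X(s))$. If there exists $r_0\ge X(0)$ with $$r_0-X(0)>V(0)\int_0^{+\infty}C(s,r_0)\,ds,$$ then the solution flocks: $\sup_{t\ge0}X(t)<+\infty$ and $V(t)\to0$ as $t\to+\infty$.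
   Context: $X(t)=\sup_{i,j}\|x_i(t)-x_j(t)\|_2$, $V(t)=\sup_{i,j}\|v_i(t)-v_j(t)\|_2$. The Dobrushin ergodicity coefficient of a stochastic matrix $P$ is $\mu(P)=\inf_{i,j}\sum_kP(i,k)\wedge P(j,k)$, with $a\wedge b=\min(a,b)$. *)

theory Defs
  imports "HOL-Analysis.Analysis"
begin

text \<open>Agents are indexed by a finite type 'n (N = CARD('n)), space is real^'d (d = CARD('d)).
A configuration ((x_k, v_k))_k \<in> R^{2dN} is an element of ((real^'d) \<times> (real^'d))^'n.\<close>

definition config :: "('n::finite \<Rightarrow> real \<Rightarrow> real^'d) \<Rightarrow> ('n \<Rightarrow> real \<Rightarrow> real^'d)
    \<Rightarrow> real \<Rightarrow> ((real^'d) \<times> (real^'d))^'n" where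
  "config x v t = (\<chi> k. (x k t, v k t))"

definition Qmat :: "('n::finite \<Rightarrow> 'n \<Rightarrow> ((real^'d) \<times> (real^'d))^'n \<Rightarrow> real)
    \<Rightarrow> ('n \<Rightarrow> real \<Rightarrow> real^'d) \<Rightarrow> ('n \<Rightarrow> real \<Rightarrow> real^'d) \<Rightarrow> real \<Rightarrow> real^'n^'n" where
  "Qmat \<Psi> x v t = (\<chi> i j. if i = j then - (\<Sum>k\<in>UNIV - {i}. \<Psi> i k (config x v t))
                              else \<Psi> i j (config x v t))"

text \<open>Position and velocity diameters X(t), V(t).\<close>
definition diam_fun :: "('n::finite \<Rightarrow> real \<Rightarrow> real^'d) \<Rightarrow> real \<Rightarrow> real" where
  "diam_fun x t = (SUP i. SUP j. norm (x i t - x j t))"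

definition dobrushin :: "real^'n::finite^'n \<Rightarrow> real" where
  "dobrushin P = (INF i. INF j. \<Sum>k\<in>UNIV. min (P $ i $ k) (P $ j $ k))"

definition locally_lipschitz :: "('a::metric_space \<Rightarrow> 'b::metric_space) \<Rightarrow> bool" where
  "locally_lipschitz f \<longleftrightarrow> (\<forall>z. \<exists>e>0. \<exists>L. L-lipschitz_on (ball z e) f)"

end

theory Submission
  imports Defs
begin

lemma diam_ge: "norm (x i t - x j t) \<le> diam_fun x t"
proof -
  have "norm (x i t - x j t) \<le> (SUP j. norm (x i t - x j t))"
    by (rule cSUP_upper) (auto intro: bdd_above_finite)
  also have "\<dots> \<le> diam_fun x t" unfolding diam_fun_def
    by (rule cSUP_upper) (auto intro: bdd_above_finite)
  finally show ?thesis .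
qed

lemma diam_nonneg: "0 \<le> diam_fun x t"
  using diam_ge[of x i t i] by simp

lemma diam_le: "(\<And>i j. norm (x i t - x j t) \<le> B) \<Longrightarrow> diam_fun x t \<le> B"
  unfolding diam_fun_def by (intro cSUP_least) auto

lemma diam_less_iff: "diam_fun x t < B \<longleftrightarrow> (\<forall>i j. norm (x i t - x j t) < B)"
proof
  assume "diam_fun x t < B" thus "\<forall>i j. norm (x i t - x j t) < B"
    using diam_ge[of x] by (meson le_less_trans)
next
  assume h: "\<forall>i j. norm (x i t - x j t) < B"
  have "\<And>i. (SUP j. norm (x i t - x j t)) < B"
    using h by (simp add: cSup_eq_Max)
  thus "diam_fun x t < B" unfolding diam_fun_def by (simp add: cSup_eq_Max)
qed

lemma contract:
  fixes a b :: "'n::finite \<Rightarrow> real" and w :: "'n \<Rightarrow> 'a::real_normed_vector"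
  assumes a: "\<And>k. a k \<ge> 0" and b: "\<And>k. b k \<ge> 0"
    and sa: "sum a UNIV = c" and sb: "sum b UNIV = c"
    and w: "\<And>k l. norm (w k - w l) \<le> D"
  shows "norm ((\<Sum>k\<in>UNIV. a k *\<^sub>R w k) - (\<Sum>k\<in>UNIV. b k *\<^sub>R w k)) \<le> c * D"
proof (cases "c = 0")
  case True
  have "\<forall>k\<in>UNIV. a k = 0" using sa True a by (subst sum_nonneg_eq_0_iff[symmetric]) auto
  moreover have "\<forall>k\<in>UNIV. b k = 0" using sb True b by (subst sum_nonneg_eq_0_iff[symmetric]) auto
  ultimately show ?thesis using True by simp
next
  case False
  have "0 \<le> sum a UNIV" by (rule sum_nonneg) (simp add: a)
  then have cpos: "c > 0" using sa False by linarith
  have i1: "(\<Sum>l\<in>UNIV. (a k * b l) *\<^sub>R w k) = (a k * c) *\<^sub>R w k" for k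
  proof -
    have "(\<Sum>l\<in>UNIV. (a k * b l) *\<^sub>R w k) = (\<Sum>l\<in>UNIV. a k * b l) *\<^sub>R w k"
      by (rule scaleR_sum_left[symmetric])
    also have "(\<Sum>l\<in>UNIV. a k * b l) = a k * c" by (simp only: sum_distrib_left[symmetric] sb)
    finally show ?thesis .
  qed
  have i2: "(\<Sum>k\<in>UNIV. (a k * b l) *\<^sub>R w l) = (c * b l) *\<^sub>R w l" for l
  proof -
    have "(\<Sum>k\<in>UNIV. (a k * b l) *\<^sub>R w l) = (\<Sum>k\<in>UNIV. a k * b l) *\<^sub>R w l"
      by (rule scaleR_sum_left[symmetric])
    also have "(\<Sum>k\<in>UNIV. a k * b l) = c * b l" by (simp only: sum_distrib_right[symmetric] sa)
    finally show ?thesis .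
  qed
  have e1: "(\<Sum>k\<in>UNIV. \<Sum>l\<in>UNIV. (a k * b l) *\<^sub>R w k) = c *\<^sub>R (\<Sum>k\<in>UNIV. a k *\<^sub>R w k)"
    unfolding i1 scaleR_sum_right scaleR_scaleR by (simp only: mult.commute)
  have e2: "(\<Sum>k\<in>UNIV. \<Sum>l\<in>UNIV. (a k * b l) *\<^sub>R w l) = c *\<^sub>R (\<Sum>k\<in>UNIV. b k *\<^sub>R w k)"
    apply (subst sum.swap)
    unfolding i2 scaleR_sum_right scaleR_scaleR ..
  have eq: "c *\<^sub>R ((\<Sum>k\<in>UNIV. a k *\<^sub>R w k) - (\<Sum>k\<in>UNIV. b k *\<^sub>R w k))
      = (\<Sum>k\<in>UNIV. \<Sum>l\<in>UNIV. (a k * b l) *\<^sub>R (w k - w l))"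
    unfolding scaleR_diff_right sum_subtractf e1 e2 ..
  have "c * norm ((\<Sum>k\<in>UNIV. a k *\<^sub>R w k) - (\<Sum>k\<in>UNIV. b k *\<^sub>R w k))
      = norm (\<Sum>k\<in>UNIV. \<Sum>l\<in>UNIV. (a k * b l) *\<^sub>R (w k - w l))"
  proof -
    have "norm (c *\<^sub>R ((\<Sum>k\<in>UNIV. a k *\<^sub>R w k) - (\<Sum>k\<in>UNIV. b k *\<^sub>R w k)))
      = c * norm ((\<Sum>k\<in>UNIV. a k *\<^sub>R w k) - (\<Sum>k\<in>UNIV. b k *\<^sub>R w k))"
      using cpos by (simp only: norm_scaleR abs_of_pos)
    then show ?thesis by (simp only: eq)
  qed
  also have "\<dots> \<le> (\<Sum>k\<in>UNIV. \<Sum>l\<in>UNIV. (a k * b l) * D)"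
  proof (rule order_trans[OF norm_sum sum_mono], rule order_trans[OF norm_sum sum_mono])
    fix k l
    show "norm ((a k * b l) *\<^sub>R (w k - w l)) \<le> a k * b l * D"
      using a[of k] b[of l] w[of k l] by (simp add: mult_left_mono)
  qed
  also have "\<dots> = c * (c * D)"
    by (simp only: sum_distrib_right[symmetric] sum_distrib_left[symmetric] sa sb mult.assoc)
  finally show ?thesis using cpos by simp
qed

lemma Q_rowsum: "(\<Sum>j\<in>UNIV. Qmat \<Psi> x v t $ i $ j) = 0"
proof -
  have "(\<Sum>j\<in>UNIV. Qmat \<Psi> x v t $ i $ j) = Qmat \<Psi> x v t $ i $ i + (\<Sum>j\<in>UNIV - {i}. Qmat \<Psi> x v t $ i $ j)"
    by (simp add: sum.remove)
  also have "(\<Sum>j\<in>UNIV - {i}. Qmat \<Psi> x v t $ i $ j) = (\<Sum>j\<in>UNIV - {i}. \<Psi> i j (config x v t))"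
    by (intro sum.cong) (auto simp: Qmat_def)
  finally show ?thesis by (simp add: Qmat_def)
qed

lemma entry_deriv:
  fixes f :: "real \<Rightarrow> real^'n^'m"
  assumes "(f has_vector_derivative D) F"
  shows "((\<lambda>s. f s $ i $ k) has_vector_derivative D $ i $ k) F"
proof -
  have bl: "bounded_linear (\<lambda>A::real^'n^'m. A $ i $ k)"
    by (rule bounded_linear_compose[where f="\<lambda>r::real^'n. r $ k"]) (rule bounded_linear_vec_nth)+
  show ?thesis using bounded_linear.has_vector_derivative[OF bl assms] .
qed

lemma propagate:
  fixes w :: "'n::finite \<Rightarrow> real \<Rightarrow> 'a::real_normed_vector"
    and P :: "real \<Rightarrow> real \<Rightarrow> real^'n^'n" and Q :: "real \<Rightarrow> real^'n^'n"
  assumes t: "0 \<le> t" and Ptt: "P t t = mat 1"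
    and Pds: "\<And>s. 0 \<le> s \<Longrightarrow> s \<le> t \<Longrightarrow>
        ((\<lambda>\<sigma>. P \<sigma> t) has_vector_derivative (- (\<alpha> *\<^sub>R (P s t ** Q s)))) (at s within {0..t})"
    and wd: "\<And>k s. 0 \<le> s \<Longrightarrow> s \<le> t \<Longrightarrow>
        (w k has_vector_derivative (\<alpha> *\<^sub>R (\<Sum>j\<in>UNIV. Q s $ k $ j *\<^sub>R w j s))) (at s within {0..t})"
  shows "w i t = (\<Sum>k\<in>UNIV. P 0 t $ i $ k *\<^sub>R w k 0)"
proof -
  define g where "g s = (\<Sum>k\<in>UNIV. P s t $ i $ k *\<^sub>R w k s)" for s
  have gd: "(g has_vector_derivative 0) (at s within {0..t})" if s: "s \<in> {0..t}" for s
  proof -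
    have "(g has_vector_derivative (\<Sum>k\<in>UNIV. P s t $ i $ k *\<^sub>R (\<alpha> *\<^sub>R (\<Sum>j\<in>UNIV. Q s $ k $ j *\<^sub>R w j s))
            + (- (\<alpha> *\<^sub>R (P s t ** Q s))) $ i $ k *\<^sub>R w k s)) (at s within {0..t})"
      unfolding g_def
      apply (intro has_vector_derivative_sum has_vector_derivative_scaleR)
      using entry_deriv[OF Pds] wd s
      by (auto simp: has_real_derivative_iff_has_vector_derivative)
    moreover have "(\<Sum>k\<in>UNIV. P s t $ i $ k *\<^sub>R (\<alpha> *\<^sub>R (\<Sum>j\<in>UNIV. Q s $ k $ j *\<^sub>R w j s))
            + (- (\<alpha> *\<^sub>R (P s t ** Q s))) $ i $ k *\<^sub>R w k s) = 0"
    proof -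
      have e1: "(\<Sum>k\<in>UNIV. P s t $ i $ k *\<^sub>R (\<alpha> *\<^sub>R (\<Sum>j\<in>UNIV. Q s $ k $ j *\<^sub>R w j s)))
          = \<alpha> *\<^sub>R (\<Sum>k\<in>UNIV. \<Sum>j\<in>UNIV. (P s t $ i $ k * Q s $ k $ j) *\<^sub>R w j s)"
        by (simp add: scaleR_sum_right sum_distrib_left mult.left_commute)
      have e2: "(\<Sum>k\<in>UNIV. (- (\<alpha> *\<^sub>R (P s t ** Q s))) $ i $ k *\<^sub>R w k s)
          = - (\<alpha> *\<^sub>R (\<Sum>k\<in>UNIV. \<Sum>j\<in>UNIV. (P s t $ i $ j * Q s $ j $ k) *\<^sub>R w k s))"
        by (simp add: matrix_matrix_mult_def scaleR_sum_right scaleR_sum_left sum_negf sum_distrib_left)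
      have e3: "(\<Sum>k\<in>UNIV. \<Sum>j\<in>UNIV. (P s t $ i $ j * Q s $ j $ k) *\<^sub>R w k s)
          = (\<Sum>k\<in>UNIV. \<Sum>j\<in>UNIV. (P s t $ i $ k * Q s $ k $ j) *\<^sub>R w j s)"
        by (rule sum.swap)
      show ?thesis unfolding sum.distrib e1 e2 e3 by simp
    qed
    ultimately show ?thesis by simp
  qed
  have "\<exists>c. \<forall>s\<in>{0..t}. g s = c"
    by (rule has_derivative_zero_constant[OF convex_real_interval(5)])
       (use gd in \<open>auto simp: has_vector_derivative_def\<close>)
  then have "g t = g 0" using t by auto
  moreover have "g t = w i t"
  proof -
    have "\<And>k. (mat 1 :: real^'n^'n) $ i $ k *\<^sub>R w k t = (if i = k then w k t else 0)"
      by (simp add: mat_def)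
    then show ?thesis by (simp add: g_def Ptt)
  qed
  ultimately show ?thesis by (simp add: g_def)
qed

lemma dob_le: "dobrushin M \<le> (\<Sum>k\<in>UNIV. min (M $ i $ k) (M $ j $ k))"
proof -
  have "dobrushin M \<le> (INF j. \<Sum>k\<in>UNIV. min (M $ i $ k) (M $ j $ k))"
    unfolding dobrushin_def by (rule cINF_lower) (auto intro: bdd_below_finite)
  also have "\<dots> \<le> (\<Sum>k\<in>UNIV. min (M $ i $ k) (M $ j $ k))"
    by (rule cINF_lower) (auto intro: bdd_below_finite)
  finally show ?thesis .
qed

lemma dob_contract:
  fixes M :: "real^'n::finite^'n" and w :: "'n \<Rightarrow> 'a::real_normed_vector"
  assumes rows: "\<And>i. (\<Sum>k\<in>UNIV. M $ i $ k) = 1" and w: "\<And>k l. norm (w k - w l) \<le> D"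
    and D: "0 \<le> D"
  shows "norm ((\<Sum>k\<in>UNIV. M $ i $ k *\<^sub>R w k) - (\<Sum>k\<in>UNIV. M $ j $ k *\<^sub>R w k)) \<le> (1 - dobrushin M) * D"
proof -
  define m where "m k = min (M $ i $ k) (M $ j $ k)" for k
  define \<mu> where "\<mu> = (\<Sum>k\<in>UNIV. m k)"
  have "norm ((\<Sum>k\<in>UNIV. (M $ i $ k - m k) *\<^sub>R w k) - (\<Sum>k\<in>UNIV. (M $ j $ k - m k) *\<^sub>R w k)) \<le> (1 - \<mu>) * D"
    by (rule contract[OF _ _ _ _ w]) (auto simp: m_def \<mu>_def sum_subtractf rows)
  moreover have "(\<Sum>k\<in>UNIV. (M $ i $ k - m k) *\<^sub>R w k) - (\<Sum>k\<in>UNIV. (M $ j $ k - m k) *\<^sub>R w k)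
      = (\<Sum>k\<in>UNIV. M $ i $ k *\<^sub>R w k) - (\<Sum>k\<in>UNIV. M $ j $ k *\<^sub>R w k)"
    by (simp add: scaleR_diff_left sum_subtractf)
  moreover have "(1 - \<mu>) * D \<le> (1 - dobrushin M) * D"
    using dob_le[of M i j] D by (intro mult_right_mono) (auto simp: \<mu>_def m_def)
  ultimately show ?thesis by simp
qed

theorem proposition4p3:
  fixes \<alpha> :: real
    and \<Psi> :: "'n::finite \<Rightarrow> 'n \<Rightarrow> ((real^'d::finite) \<times> (real^'d))^'n \<Rightarrow> real"
    and x v :: "'n \<Rightarrow> real \<Rightarrow> real^'d"
    and P :: "real \<Rightarrow> real \<Rightarrow> real^'n^'n"
    and C :: "real \<Rightarrow> real \<Rightarrow> real"
  assumes alpha_pos: "\<alpha> > 0"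
    and Psi_nonneg: "\<And>i j z. i \<noteq> j \<Longrightarrow> \<Psi> i j z \<ge> 0"
    and Psi_bounded: "\<And>i j. i \<noteq> j \<Longrightarrow> bounded (range (\<Psi> i j))"
    and Psi_loclip: "\<And>i j. i \<noteq> j \<Longrightarrow> locally_lipschitz (\<Psi> i j)"
    and x_ode: "\<And>i t. t \<ge> 0 \<Longrightarrow> (x i has_vector_derivative v i t) (at t within {0..})"
    and v_ode: "\<And>i t. t \<ge> 0 \<Longrightarrow> (v i has_vector_derivative
               (\<alpha> *\<^sub>R (\<Sum>j\<in>UNIV. Qmat \<Psi> x v t $ i $ j *\<^sub>R (v j t - v i t)))) (at t within {0..})"
    and P_diag: "\<And>t. t \<ge> 0 \<Longrightarrow> P t t = mat 1"
    and P_dt: "\<And>s t. 0 \<le> s \<Longrightarrow> s \<le> t \<Longrightarrow>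
               ((\<lambda>\<tau>. P s \<tau>) has_vector_derivative (\<alpha> *\<^sub>R (Qmat \<Psi> x v t ** P s t))) (at t within {s..})"
    and P_ds: "\<And>s t. 0 \<le> s \<Longrightarrow> s \<le> t \<Longrightarrow>
               ((\<lambda>\<sigma>. P \<sigma> t) has_vector_derivative (- (\<alpha> *\<^sub>R (P s t ** Qmat \<Psi> x v s)))) (at s within {0..t})"
    and C_nonneg: "\<And>t r. t \<ge> 0 \<Longrightarrow> r \<ge> 0 \<Longrightarrow> C t r \<ge> 0"
    and C_mono: "\<And>t. t \<ge> 0 \<Longrightarrow> mono_on {0..} (C t)"
    and C_lim: "\<And>r. r \<ge> diam_fun x 0 \<Longrightarrow> ((\<lambda>t. C t r) \<longlongrightarrow> 0) at_top"
    and C_bound: "\<And>t. t \<ge> 0 \<Longrightarrow> 1 - dobrushin (P 0 t) \<le> C t (SUP s\<in>{0..t}. diam_fun x s)"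
    and r0: "\<exists>r0 \<ge> diam_fun x 0. (\<lambda>s. C s r0) integrable_on {0..} \<and>
               r0 - diam_fun x 0 > diam_fun v 0 * integral {0..} (\<lambda>s. C s r0)"
  shows "bdd_above (diam_fun x ` {0..}) \<and> ((\<lambda>t. diam_fun v t) \<longlongrightarrow> 0) at_top"
proof -
  obtain r0 where r0ge: "r0 \<ge> diam_fun x 0" and Cint: "(\<lambda>s. C s r0) integrable_on {0..}"
    and r0gt: "r0 - diam_fun x 0 > diam_fun v 0 * integral {0..} (\<lambda>s. C s r0)"
    using r0 by blast
  define I where "I = integral {0..} (\<lambda>s. C s r0)"
  define V0 where "V0 = diam_fun v 0"
  have V0nn: "0 \<le> V0" unfolding V0_def by (rule diam_nonneg)
  have r0nn: "0 \<le> r0" using diam_nonneg[of x 0] r0ge by linarith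
  have Cnn: "\<And>s. 0 \<le> s \<Longrightarrow> 0 \<le> C s r0" using C_nonneg r0nn by blast
  have Inn: "0 \<le> I" unfolding I_def by (rule integral_nonneg[OF Cint]) (auto intro: Cnn)
  have R_lt: "diam_fun x 0 + V0 * I < r0" using r0gt by (simp add: I_def V0_def)

  have vder: "(v k has_vector_derivative \<alpha> *\<^sub>R (\<Sum>j\<in>UNIV. Qmat \<Psi> x v s $ k $ j *\<^sub>R v j s)) (at s within {0..})"
    if "0 \<le> s" for k s
  proof -
    have "(\<Sum>j\<in>UNIV. Qmat \<Psi> x v s $ k $ j *\<^sub>R (v j s - v k s))
        = (\<Sum>j\<in>UNIV. Qmat \<Psi> x v s $ k $ j *\<^sub>R v j s) - (\<Sum>j\<in>UNIV. Qmat \<Psi> x v s $ k $ j) *\<^sub>R v k s"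
      by (simp add: scaleR_diff_right sum_subtractf scaleR_sum_left)
    also have "\<dots> = (\<Sum>j\<in>UNIV. Qmat \<Psi> x v s $ k $ j *\<^sub>R v j s)" by (simp add: Q_rowsum)
    finally show ?thesis using v_ode[OF that, of k] by simp
  qed
  have vrep: "v i t = (\<Sum>k\<in>UNIV. P 0 t $ i $ k *\<^sub>R v k 0)" if t: "0 \<le> t" for i t
    by (rule propagate[where Q="Qmat \<Psi> x v" and \<alpha>=\<alpha> and P=P and w=v, OF t P_diag[OF t]])
       (auto intro: P_ds has_vector_derivative_within_subset[OF vder])
  have rows: "(\<Sum>k\<in>UNIV. P 0 t $ i $ k) = 1" if t: "0 \<le> t" for i t
  proof -
    have "(1::real) = (\<Sum>k\<in>UNIV. P 0 t $ i $ k *\<^sub>R (1::real))"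
    proof (rule propagate[where Q="Qmat \<Psi> x v" and \<alpha>=\<alpha> and P=P and w="\<lambda>k s. 1::real", OF t P_diag[OF t]])
      show "\<And>s. 0 \<le> s \<Longrightarrow> s \<le> t \<Longrightarrow> ((\<lambda>\<sigma>. P \<sigma> t) has_vector_derivative - (\<alpha> *\<^sub>R (P s t ** Qmat \<Psi> x v s))) (at s within {0..t})"
        by (rule P_ds)
      fix k s
      have "\<alpha> *\<^sub>R (\<Sum>j\<in>UNIV. Qmat \<Psi> x v s $ k $ j *\<^sub>R (1::real)) = 0"
        using Q_rowsum[of \<Psi> x v s k] by simp
      then show "((\<lambda>s. 1::real) has_vector_derivative \<alpha> *\<^sub>R (\<Sum>j\<in>UNIV. Qmat \<Psi> x v s $ k $ j *\<^sub>R (1::real))) (at s within {0..t})"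
        by (simp only:) (rule has_vector_derivative_const)
    qed
    then show ?thesis by simp
  qed
  have Vbound: "norm (v i t - v j t) \<le> C t (SUP s\<in>{0..t}. diam_fun x s) * V0" if t: "0 \<le> t" for i j t
  proof -
    have "norm (v i t - v j t) \<le> (1 - dobrushin (P 0 t)) * V0"
      unfolding vrep[OF t, of i] vrep[OF t, of j] V0_def
      by (rule dob_contract[OF rows[OF t] diam_ge diam_nonneg])
    also have "\<dots> \<le> C t (SUP s\<in>{0..t}. diam_fun x s) * V0"
      by (rule mult_right_mono[OF C_bound[OF t] V0nn])
    finally show ?thesis .
  qed
  have xcont: "continuous_on {0..} (x i)" for i
    using x_ode by (auto simp: continuous_on_eq_continuous_within intro: has_vector_derivative_continuous)

  have posb: "norm (x i \<tau> - x j \<tau>) \<le> diam_fun x 0 + V0 * I"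
    if tau: "0 \<le> \<tau>" and hv: "\<And>s. 0 \<le> s \<Longrightarrow> s < \<tau> \<Longrightarrow> norm (v i s - v j s) \<le> V0 * C s r0" for \<tau> i j
  proof -
    define f' where "f' s = v i s - v j s" for s
    define f'' where "f'' s = (if s = \<tau> then 0 else f' s)" for s
    define g where "g = (\<lambda>s. V0 * C s r0)"
    have "(f' has_integral ((x i \<tau> - x j \<tau>) - (x i 0 - x j 0))) {0..\<tau>}"
      unfolding f'_def
      by (rule fundamental_theorem_of_calculus[OF tau])
         (auto intro!: has_vector_derivative_diff has_vector_derivative_within_subset[OF x_ode])
    then have hi: "(f'' has_integral ((x i \<tau> - x j \<tau>) - (x i 0 - x j 0))) {0..\<tau>}"
      using has_integral_spike_finite[of "{\<tau>}" "{0..\<tau>}" f'' f'] by (auto simp: f''_def)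
    have gint: "g integrable_on {0..\<tau>}"
      unfolding g_def using integrable_on_cmult_left[OF integrable_on_subinterval[OF Cint], of 0 \<tau> V0]
      by auto
    have "norm (integral {0..\<tau>} f'') \<le> integral {0..\<tau>} g"
      by (rule integral_norm_bound_integral[OF has_integral_integrable[OF hi] gint])
         (auto simp: f''_def g_def f'_def V0nn Cnn hv)
    then have n1: "norm ((x i \<tau> - x j \<tau>) - (x i 0 - x j 0)) \<le> V0 * integral {0..\<tau>} (\<lambda>s. C s r0)"
      using integral_unique[OF hi] by (simp add: g_def)
    have "integral {0..\<tau>} (\<lambda>s. C s r0) \<le> I"
      unfolding I_def
      by (rule integral_subset_le[OF _ integrable_on_subinterval[OF Cint] Cint]) (auto intro: Cnn)
    then have n2: "V0 * integral {0..\<tau>} (\<lambda>s. C s r0) \<le> V0 * I"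
      by (rule mult_left_mono[OF _ V0nn])
    have "norm (x i \<tau> - x j \<tau>) \<le> norm (x i 0 - x j 0) + norm ((x i \<tau> - x j \<tau>) - (x i 0 - x j 0))"
      by (rule norm_triangle_sub)
    also have "\<dots> \<le> diam_fun x 0 + V0 * I"
      using diam_ge[of x i 0 j] n1 n2 by linarith
    finally show ?thesis .
  qed

  have Sle: "(SUP s\<in>{0..t}. diam_fun x s) \<le> r0 \<and> 0 \<le> (SUP s\<in>{0..t}. diam_fun x s)"
    if t: "0 \<le> t" and h: "\<And>s. 0 \<le> s \<Longrightarrow> s \<le> t \<Longrightarrow> diam_fun x s < r0" for t
  proof
    show "(SUP s\<in>{0..t}. diam_fun x s) \<le> r0"
      using h t by (intro cSUP_least) (auto intro: less_imp_le)
    have "diam_fun x 0 \<le> (SUP s\<in>{0..t}. diam_fun x s)"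
      using h t by (intro cSUP_upper bdd_aboveI2[where M=r0]) (auto intro: less_imp_le)
    then show "0 \<le> (SUP s\<in>{0..t}. diam_fun x s)" using diam_nonneg[of x 0] by linarith
  qed
  have Vle: "norm (v i t - v j t) \<le> V0 * C t r0"
    if t: "0 \<le> t" and h: "\<And>s. 0 \<le> s \<Longrightarrow> s \<le> t \<Longrightarrow> diam_fun x s < r0" for i j t
  proof -
    have "C t (SUP s\<in>{0..t}. diam_fun x s) \<le> C t r0"
      using Sle[OF t h] r0nn by (intro mono_onD[OF C_mono[OF t]]) auto
    then show ?thesis using Vbound[OF t, of i j] V0nn
      by (metis mult.commute mult_left_mono order_trans)
  qed

  have Xlt: "\<forall>t\<ge>0. diam_fun x t < r0"
  proof (rule ccontr)
    assume "\<not> (\<forall>t\<ge>0. diam_fun x t < r0)"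
    then obtain t1 where t1: "0 \<le> t1" "\<not> diam_fun x t1 < r0" by auto
    define B where "B = {t \<in> {0..}. \<not> diam_fun x t < r0}"
    have Beq: "B = (\<Union>i. \<Union>j. {t \<in> {0..}. r0 \<le> norm (x i t - x j t)})"
      unfolding B_def diam_less_iff by (auto simp: not_less)
    have "closed {t \<in> {0..}. r0 \<le> norm (x i t - x j t)}" for i j
      by (intro continuous_on_closed_Collect_le continuous_on_const
            continuous_on_norm continuous_on_diff xcont closed_atLeast)
    then have "closed B" unfolding Beq by (intro closed_UN finite_UNIV ballI) auto
    moreover have "B \<noteq> {}" using t1 by (auto simp: B_def)
    moreover have bb: "bdd_below B" by (rule bdd_belowI[where m=0]) (auto simp: B_def)
    ultimately have tauB: "Inf B \<in> B" by (rule closed_contains_Inf[rotated 2])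
    define \<tau> where "\<tau> = Inf B"
    have tau0: "0 \<le> \<tau>" using tauB by (auto simp: B_def \<tau>_def)
    have below: "diam_fun x s < r0" if "0 \<le> s" "s < \<tau>" for s
    proof (rule ccontr)
      assume "\<not> diam_fun x s < r0"
      then have "s \<in> B" using that by (auto simp: B_def)
      then have "\<tau> \<le> s" unfolding \<tau>_def by (rule cInf_lower[OF _ bb])
      then show False using that by simp
    qed
    have "norm (x i \<tau> - x j \<tau>) < r0" for i j
    proof -
      have "norm (x i \<tau> - x j \<tau>) \<le> diam_fun x 0 + V0 * I"
        by (rule posb[OF tau0]) (rule Vle, auto intro: below)
      then show ?thesis using R_lt by linarith
    qed
    then have "diam_fun x \<tau> < r0" by (simp add: diam_less_iff)
    then show False using tauB by (simp add: B_def \<tau>_def)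
  qed

  show ?thesis
  proof
    show "bdd_above (diam_fun x ` {0..})"
      using Xlt by (intro bdd_aboveI2[where M=r0]) (auto intro: less_imp_le)
    have Vt: "diam_fun v t \<le> V0 * C t r0" if "0 \<le> t" for t
      by (rule diam_le) (rule Vle[OF that], auto simp: Xlt)
    show "((\<lambda>t. diam_fun v t) \<longlongrightarrow> 0) at_top"
    proof (rule tendsto_sandwich[where f="\<lambda>_. 0" and h="\<lambda>t. V0 * C t r0"])
      show "\<forall>\<^sub>F t in at_top. 0 \<le> diam_fun v t" by (simp add: diam_nonneg)
      show "\<forall>\<^sub>F t in at_top. diam_fun v t \<le> V0 * C t r0"
        using Vt by (auto simp: eventually_at_top_linorder)
      show "((\<lambda>_. 0) \<longlongrightarrow> (0::real)) at_top" by simp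
      show "((\<lambda>t. V0 * C t r0) \<longlongrightarrow> 0) at_top"
        using tendsto_mult[OF tendsto_const C_lim[OF r0ge], of V0] by simp
    qed
  qed
qed

end
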